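(* Let $q\geq 3$ and $n\ge 2$. The graph with vertex set $\mathcal{HGL}_n(\mathbb{F}_{q^2})$, in which $A,B$ are joined by an edge iff $\operatorname{rank}(A-B)=1$, is connected.
   Context: $\mathbb{F}_{q^2}$ is the field with $q^2$ elements with involution $\bar x=x^q$; $X^\ast=\bar X^\top$; $A$ is hermitian if $A^\ast=A$; $\mathcal{HGL}_n(\mathbb{F}_{q^2})$ is the set of invertible $n\times n$ hermitian matrices over $\mathbb{F}_{q^2}$. *)

theory Defs
  imports "Jordan_Normal_Form.DL_Rank"
begin

text \<open>The involution of F_{q^2}: conjugation x maps to x^q.\<close>
definition qbar :: "nat \<Rightarrow> 'a::field \<Rightarrow> 'a" where
  "qbar q x = x ^ q"

definition conj_transpose :: "nat \<Rightarrow> 'a::field mat \<Rightarrow> 'a mat" where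
  "conj_transpose q A = transpose_mat (map_mat (qbar q) A)"

definition hermitian_mat :: "nat \<Rightarrow> 'a::field mat \<Rightarrow> bool" where
  "hermitian_mat q A \<longleftrightarrow> conj_transpose q A = A"

definition HGL :: "nat \<Rightarrow> nat \<Rightarrow> 'a::field mat set" where
  "HGL q n = {A. A \<in> carrier_mat n n \<and> hermitian_mat q A \<and> invertible_mat A}"

definition HGL_adj :: "nat \<Rightarrow> nat \<Rightarrow> 'a::field mat \<Rightarrow> 'a mat \<Rightarrow> bool" where
  "HGL_adj q n A B \<longleftrightarrow> A \<in> HGL q n \<and> B \<in> HGL q n \<and> vec_space.rank n (A - B) = 1"

end

theory Submission
  imports Defs "HOL-Computational_Algebra.Primes" "Jordan_Normal_Form.DL_Rank_Submatrix"
begin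

lemma ff_pow_card:
  fixes x :: "'a::{finite,field}"
  shows "x ^ card (UNIV :: 'a set) = x"
proof (cases "x = 0")
  case False
  have "x * (\<Prod>y\<in>UNIV-{0}. x * y) = x * x ^ (card (UNIV :: 'a set) - 1) * \<Prod>(UNIV-{0})"
    by (simp add: prod.distrib mult_ac)
  also have "x * x ^ (card (UNIV :: 'a set) - 1) = x ^ Suc (card (UNIV :: 'a set) - 1)"
    by (subst power_Suc) auto
  also have "Suc (card (UNIV :: 'a set) - 1) = card (UNIV :: 'a set)"
    using finite_UNIV_card_ge_0[where ?'a = 'a] by simp
  also have "(\<Prod>y\<in>UNIV-{0}. x * y) = (\<Prod>y\<in>UNIV-{0}. y)"
    by (rule prod.reindex_bij_witness[of _ "\<lambda>y. y / x" "\<lambda>y. x * y"]) (use False in auto)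
  finally show ?thesis
    by simp
qed (use finite_UNIV_card_ge_0[where ?'a = 'a] in auto)

lemma ff_char_prime: "prime CHAR('a::{finite,field})"
  by (rule prime_CHAR_semidom) (rule finite_imp_CHAR_pos, simp)

lemma ff_inverse_pow:
  fixes a :: "'a::{finite,field}"
  assumes "a \<noteq> 0"
  shows "inverse a = a ^ (card (UNIV :: 'a set) - 2)"
proof -
  let ?N = "card (UNIV :: 'a set)"
  have N2: "?N \<ge> 2"
  proof -
    have "{0, 1::'a} \<subseteq> UNIV" by simp
    then have "card {0, 1::'a} \<le> ?N" by (rule card_mono[OF finite_UNIV])
    then show ?thesis by simp
  qed
  have eqN: "?N = Suc (Suc (?N - 2))" using N2 by simp
  have "a ^ ?N = a * a ^ (?N - 2) * a"
    by (subst eqN) (simp add: mult_ac)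
  then have "a * a ^ (?N - 2) * a = 1 * a" using ff_pow_card[of a] by simp
  then have "a * a ^ (?N - 2) = 1" using assms by (simp only: mult_cancel_right) simp
  then show ?thesis by (rule inverse_unique)
qed

lemma of_nat_mod_CHAR: "(of_nat (k mod CHAR('a)) :: 'a::semiring_1) = of_nat k"
proof -
  have "(of_nat k :: 'a) = of_nat (k div CHAR('a) * CHAR('a) + k mod CHAR('a))" by simp
  also have "\<dots> = of_nat (k mod CHAR('a))" by (simp only: of_nat_add of_nat_mult of_nat_CHAR) simp
  finally show ?thesis by simp
qed

lemma of_nat_mult_closed:
  fixes S :: "'a::field set"
  assumes "0 \<in> S" "\<forall>x\<in>S. \<forall>y\<in>S. x + y \<in> S" "t \<in> S"
  shows "of_nat m * t \<in> S"
  using assms by (induction m) (auto simp: distrib_right)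

lemma neg_in_closed:
  fixes S :: "'a::{finite,field} set"
  assumes "0 \<in> S" "\<forall>x\<in>S. \<forall>y\<in>S. x + y \<in> S" "t \<in> S"
  shows "- t \<in> S"
proof -
  have p2: "CHAR('a) \<ge> 2" using ff_char_prime prime_ge_2_nat by blast
  have "(of_nat (CHAR('a) - 1) :: 'a) + 1 = of_nat CHAR('a)"
    using p2 by (metis Suc_diff_1 le_trans nat_le_linear not_numeral_le_zero of_nat_Suc add.commute
        bot_nat_0.not_eq_extremum)
  then have "(of_nat (CHAR('a) - 1) :: 'a) = -1" by (simp add: eq_neg_iff_add_eq_0)
  then have "- t = of_nat (CHAR('a) - 1) * t" by simp
  then show ?thesis using of_nat_mult_closed[OF assms] by metis
qed

lemma inj_aux:
  fixes S :: "'a::{finite,field} set"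
  assumes S0: "0 \<in> S" and Sadd: "\<forall>x\<in>S. \<forall>y\<in>S. x + y \<in> S" and xS: "x \<notin> S"
    and ij: "i \<le> j" "j < CHAR('a)" and st: "s \<in> S" "t \<in> S"
    and eq: "s + of_nat i * x = t + of_nat j * x"
  shows "i = j \<and> s = t"
proof (cases "i = j")
  case True then show ?thesis using eq by simp
next
  case False
  define k where "k = j - i"
  have k: "0 < k" "k < CHAR('a)" using False ij unfolding k_def by auto
  have jk: "(of_nat j :: 'a) = of_nat i + of_nat k" using ij unfolding k_def by (simp flip: of_nat_add)
  have kx: "of_nat k * x = s + - t" using eq unfolding jk by (simp add: algebra_simps)
  have smt: "s + - t \<in> S" using Sadd st neg_in_closed[OF S0 Sadd st(2)] by blast
  have k0: "(of_nat k :: 'a) \<noteq> 0"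
    using k by (simp add: of_nat_eq_0_iff_char_dvd) (meson nat_dvd_not_less)
  have "x = inverse (of_nat k) * (s + - t)" using kx k0 by (metis inverse_unique mult.assoc mult.commute mult_1 right_inverse)
  also have "\<dots> = of_nat (k ^ (card (UNIV::'a set) - 2)) * (s + - t)"
    using ff_inverse_pow[OF k0] by simp
  finally have "x \<in> S" using of_nat_mult_closed[OF S0 Sadd smt] by metis
  then show ?thesis using xS by simp
qed

lemma grow_step:
  fixes S :: "'a::{finite,field} set"
  assumes S0: "0 \<in> S" and Sadd: "\<forall>x\<in>S. \<forall>y\<in>S. x + y \<in> S" and xS: "x \<notin> S"
  defines "p \<equiv> CHAR('a)"
  defines "S' \<equiv> (\<lambda>(s,i). s + of_nat i * x) ` (S \<times> {..<p})"
  shows "0 \<in> S'" "\<forall>x\<in>S'. \<forall>y\<in>S'. x + y \<in> S'" "S \<subset> S'" "card S' = p * card S"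
proof -
  have pp: "prime p" unfolding p_def by (rule ff_char_prime)
  then have p2: "p \<ge> 2" by (rule prime_ge_2_nat)
  have ofp: "(of_nat p :: 'a) = 0" unfolding p_def by simp
  show "0 \<in> S'" unfolding S'_def using S0 p2 by (auto intro!: image_eqI[of _ _ "(0,0)"])
  show "\<forall>u\<in>S'. \<forall>w\<in>S'. u + w \<in> S'"
  proof (intro ballI)
    fix u w assume "u \<in> S'" "w \<in> S'"
    then obtain s i t j where st: "s \<in> S" "t \<in> S" "i < p" "j < p"
      and u: "u = s + of_nat i * x" and w: "w = t + of_nat j * x" unfolding S'_def by auto
    have "u + w = (s + t) + of_nat ((i + j) mod p) * x"
      using of_nat_mod_CHAR[of "i+j", where 'a='a] unfolding u w p_def by (simp add: algebra_simps)
    then show "u + w \<in> S'" unfolding S'_def using st Sadd p2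
      by (auto intro!: image_eqI[of _ _ "(s+t, (i+j) mod p)"])
  qed
  show "S \<subset> S'"
  proof -
    have "S \<subseteq> S'" unfolding S'_def using p2 by (force intro!: image_eqI[of _ _ "(s,0)" for s])
    moreover have "x \<in> S'" unfolding S'_def using p2 S0 by (force intro!: image_eqI[of _ _ "(0,1)"])
    ultimately show ?thesis using xS by blast
  qed
  have inj: "inj_on (\<lambda>(s,i). s + of_nat i * x) (S \<times> {..<p})"
  proof (rule inj_onI, clarify)
    fix s i t j assume a: "s \<in> S" "i < p" "t \<in> S" "j < p" "s + of_nat i * x = t + of_nat j * x"
    show "s = t \<and> i = j"
    proof (cases "i \<le> j")
      case True then show ?thesis using inj_aux[OF S0 Sadd xS True _ a(1,3) a(5)] a unfolding p_def by auto
    next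
      case False then have ji: "j \<le> i" by simp
      then show ?thesis using inj_aux[OF S0 Sadd xS ji _ a(3,1) a(5)[symmetric]] a unfolding p_def by auto
    qed
  qed
  show "card S' = p * card S" unfolding S'_def card_image[OF inj] card_cartesian_product by simp
qed

lemma card_closed_power:
  fixes S :: "'a::{finite,field} set"
  assumes "0 \<in> S" "\<forall>x\<in>S. \<forall>y\<in>S. x + y \<in> S"
  shows "\<exists>k. card (UNIV::'a set) = CHAR('a) ^ k * card S"
  using assms
proof (induction "card (UNIV - S)" arbitrary: S rule: less_induct)
  case less
  show ?case
  proof (cases "S = UNIV")
    case True then show ?thesis by (intro exI[of _ 0]) simp
  next
    case False
    then obtain x where xS: "x \<notin> S" by blast
    define S' where "S' \<equiv> (\<lambda>(s,i). s + of_nat i * x) ` (S \<times> {..<CHAR('a)})"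
    note g = grow_step[OF less.prems xS, folded S'_def]
    have "card (UNIV - S') < card (UNIV - S)"
      using g(3) by (intro psubset_card_mono) auto
    from less.hyps[OF this g(1,2)] obtain k where "card (UNIV::'a set) = CHAR('a) ^ k * card S'" by blast
    then have "card (UNIV::'a set) = CHAR('a) ^ Suc k * card S" using g(4) by simp
    then show ?thesis by blast
  qed
qed

lemma card_char_power: "\<exists>k. card (UNIV::'a::{finite,field} set) = CHAR('a) ^ k"
  using card_closed_power[of "{0::'a}"] by simp

lemma q_char_power:
  assumes "card (UNIV :: 'a::{finite,field} set) = q ^ 2"
  shows "\<exists>j. q = CHAR('a) ^ j"
proof -
  obtain k where k: "card (UNIV::'a set) = CHAR('a) ^ k" using card_char_power by blast
  have "q dvd CHAR('a) ^ k" using assms k by (metis dvd_triv_left power2_eq_square)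
  then show ?thesis using divides_primepow_nat[OF ff_char_prime] by blast
qed

lemma frob_add:
  assumes "card (UNIV :: 'a::{finite,field} set) = q ^ 2"
  shows "(x + y :: 'a) ^ q = x ^ q + y ^ q"
proof -
  obtain j where "q = CHAR('a) ^ j" using q_char_power[OF assms] by blast
  then show ?thesis by (intro freshmans_dream'[OF ff_char_prime])
qed

lemma frob_minus:
  assumes "card (UNIV :: 'a::{finite,field} set) = q ^ 2"
  shows "(x - y :: 'a) ^ q = x ^ q - y ^ q"
  using frob_add[OF assms, of "x - y" y] by (simp add: algebra_simps)

lemma frob_invol:
  assumes "card (UNIV :: 'a::{finite,field} set) = q ^ 2"
  shows "((x :: 'a) ^ q) ^ q = x"
  using ff_pow_card[of x] assms by (simp add: power2_eq_square flip: power_mult)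

lemma frob_neg:
  assumes "card (UNIV :: 'a::{finite,field} set) = q ^ 2" "q > 0"
  shows "(- x :: 'a) ^ q = - (x ^ q)"
  using frob_minus[OF assms(1), of 0 x] assms(2) by simp

lemma card_fix_ge:
  assumes c: "card (UNIV :: 'a::{finite,field} set) = q ^ 2" and q0: "q > 0"
  shows "q \<le> card {x::'a. x ^ q = x}"
proof -
  define F where "F = {x::'a. x ^ q = x}"
  define G where "G = {x::'a. x ^ q = - x}"
  define T where "T = (\<lambda>x::'a. x ^ q - x)"
  have Tm: "T (x - y) = T x - T y" for x y unfolding T_def by (simp add: frob_minus[OF c])
  have TG: "T x \<in> G" for x
    unfolding G_def T_def by (simp add: frob_minus[OF c] frob_invol[OF c])
  define s where "s = inv_into UNIV T"
  have sT: "T (s (T x)) = T x" for x unfolding s_def by (meson f_inv_into_f rangeI)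
  define \<phi> where "\<phi> = (\<lambda>x. (x - s (T x), T x))"
  have "inj \<phi>"
  proof (rule injI)
    fix x y assume "\<phi> x = \<phi> y" then show "x = y" unfolding \<phi>_def by auto
  qed
  moreover have "\<phi> ` UNIV \<subseteq> F \<times> G"
  proof clarify
    fix a b x assume "(a, b) = \<phi> x"
    then have a: "a = x - s (T x)" "b = T x" unfolding \<phi>_def by auto
    have "T a = 0" unfolding a Tm sT by simp
    then show "a \<in> F \<and> b \<in> G" using TG a unfolding F_def T_def by simp
  qed
  ultimately have "card (UNIV::'a set) \<le> card (F \<times> G)"
    by (intro card_inj_on_le[of \<phi>]) auto
  also have "\<dots> = card F * card G" by (rule card_cartesian_product)
  finally have 1: "q * q \<le> card F * card G" using c by (simp add: power2_eq_square)
  have F0: "0 \<in> F" unfolding F_def using q0 by simp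
  have "card G \<le> card F"
  proof (cases "\<exists>y0\<in>G. y0 \<noteq> 0")
    case True
    then obtain y0 where y0: "y0 \<in> G" "y0 \<noteq> 0" by blast
    have "inj_on (\<lambda>y. y / y0) G" using y0 by (intro inj_onI) simp
    moreover have "(\<lambda>y. y / y0) ` G \<subseteq> F"
      using y0 unfolding G_def F_def by (auto simp: power_divide)
    ultimately show ?thesis by (intro card_inj_on_le[of "\<lambda>y. y / y0"]) auto
  next
    case False
    then have "G \<subseteq> {0}" by auto
    then have "card G \<le> card {0::'a}" by (intro card_mono) auto
    then have "card G \<le> 1" by simp
    moreover have "1 \<le> card F" using F0 by (simp add: Suc_le_eq card_gt_0_iff) blast
    ultimately show ?thesis by simp
  qed
  then have "q * q \<le> card F * card F" using 1 by (meson le_trans mult_le_mono2)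
  then have "q ^ 2 \<le> card F ^ 2" by (simp add: power2_eq_square)
  then have "q \<le> card F" by (rule power2_le_imp_le) simp
  then show ?thesis unfolding F_def .
qed


lemma inv_det:
  fixes A :: "'a::field mat"
  assumes A: "A \<in> carrier_mat n n"
  shows "invertible_mat A \<longleftrightarrow> det A \<noteq> 0"
proof
  assume "invertible_mat A"
  then obtain B where AB: "A * B = 1\<^sub>m n" and BA: "B * A = 1\<^sub>m (dim_row B)"
    using A unfolding invertible_mat_def inverts_mat_def by auto
  have "dim_col B = n" using arg_cong[OF AB, of dim_col] by simp
  moreover have "dim_row B = n" using arg_cong[OF BA, of dim_col] A by simp
  ultimately have B: "B \<in> carrier_mat n n" by auto
  have "det A * det B = 1" using det_mult[OF A B] AB by simp
  then show "det A \<noteq> 0" by auto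
next
  assume "det A \<noteq> 0"
  from det_non_zero_imp_unit[OF A this, of "()"]
  obtain B where B: "B \<in> carrier_mat n n" "B * A = 1\<^sub>m n" "A * B = 1\<^sub>m n"
    unfolding Units_def ring_mat_simps by auto
  then show "invertible_mat A" using A unfolding invertible_mat_def inverts_mat_def square_mat.simps
    by auto
qed

lemma mv_index:
  fixes M :: "'a::field mat"
  assumes "M \<in> carrier_mat n n" "v \<in> carrier_vec n" "a < n"
  shows "(M *\<^sub>v v) $ a = (\<Sum>b<n. M $$ (a,b) * v $ b)"
  using assms by (simp add: scalar_prod_def lessThan_atLeast0)

lemma det_nz_kernel:
  fixes M :: "'a::field mat"
  assumes "M \<in> carrier_mat n n" "det M \<noteq> 0" "v \<in> carrier_vec n" "M *\<^sub>v v = 0\<^sub>v n"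
  shows "v = 0\<^sub>v n"
  using det_0_iff_vec_prod_zero_field[OF assms(1)] assms by blast

lemma solve_aux:
  fixes M :: "'a::field mat"
  assumes M: "M \<in> carrier_mat n n" "det M \<noteq> 0"
    and d: "det (mat n n (\<lambda>(a,b). M $$ (a,b) + d * (f a * g b))) = 0"
  shows "\<exists>y \<in> carrier_vec n. M *\<^sub>v y = vec n f \<and> (\<Sum>b<n. g b * y $ b) = - inverse d \<and> d \<noteq> 0"
proof -
  let ?X = "mat n n (\<lambda>(a,b). M $$ (a,b) + d * (f a * g b))"
  have X: "?X \<in> carrier_mat n n" by simp
  obtain x where x: "x \<in> carrier_vec n" "x \<noteq> 0\<^sub>v n" "?X *\<^sub>v x = 0\<^sub>v n"
    using det_0_iff_vec_prod_zero_field[OF X] d by blast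
  define s where "s = (\<Sum>b<n. g b * x $ b)"
  have key: "(M *\<^sub>v x) $ a = - (d * s) * f a" if a: "a < n" for a
  proof -
    have "0 = (?X *\<^sub>v x) $ a" using x(3) a by simp
    also have "\<dots> = (\<Sum>b<n. (M $$ (a,b) + d * (f a * g b)) * x $ b)"
      using mv_index[OF X x(1) a] a by simp
    also have "\<dots> = (\<Sum>b<n. M $$ (a,b) * x $ b) + d * f a * s"
      unfolding s_def by (simp add: algebra_simps sum.distrib sum_distrib_left)
    also have "(\<Sum>b<n. M $$ (a,b) * x $ b) = (M *\<^sub>v x) $ a" using mv_index[OF M(1) x(1) a] by simp
    finally show ?thesis by (simp add: algebra_simps eq_neg_iff_add_eq_0)
  qed
  have ds: "d * s \<noteq> 0"
  proof
    assume "d * s = 0"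
    then have "M *\<^sub>v x = 0\<^sub>v n" using key M(1) x(1) by (intro eq_vecI) auto
    then show False using det_nz_kernel[OF M x(1)] x(2) by simp
  qed
  define c where "c = - inverse (d * s)"
  define y where "y = vec n (\<lambda>b. c * x $ b)"
  have y: "y \<in> carrier_vec n" unfolding y_def by simp
  have "M *\<^sub>v y = vec n f"
  proof (rule eq_vecI)
    fix a assume "a < dim_vec (vec n f)"
    then have a: "a < n" by simp
    have "(M *\<^sub>v y) $ a = (\<Sum>b<n. M $$ (a,b) * y $ b)" by (rule mv_index[OF M(1) y a])
    also have "\<dots> = c * (\<Sum>b<n. M $$ (a,b) * x $ b)"
      unfolding y_def by (simp add: sum_distrib_left mult_ac)
    also have "\<dots> = c * (- (d * s) * f a)" using key[OF a] mv_index[OF M(1) x(1) a] by simp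
    also have "\<dots> = f a" unfolding c_def using ds by (simp add: field_simps)
    finally show "(M *\<^sub>v y) $ a = vec n f $ a" using a by simp
  qed (use M(1) in simp)
  moreover have "(\<Sum>b<n. g b * y $ b) = - inverse d"
  proof -
    have "(\<Sum>b<n. g b * y $ b) = c * s" unfolding y_def s_def by (simp add: sum_distrib_left mult_ac)
    also have "\<dots> = - inverse d" unfolding c_def using ds by (simp add: field_simps)
    finally show ?thesis .
  qed
  ultimately show ?thesis using y ds by auto
qed

lemma amo:
  fixes M :: "'a::field mat"
  assumes M: "M \<in> carrier_mat n n" "det M \<noteq> 0"
    and d1: "det (mat n n (\<lambda>(a,b). M $$ (a,b) + d1 * (f a * g b))) = 0"
    and d2: "det (mat n n (\<lambda>(a,b). M $$ (a,b) + d2 * (f a * g b))) = 0"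
  shows "d1 = d2"
proof -
  obtain y1 where y1: "y1 \<in> carrier_vec n" "M *\<^sub>v y1 = vec n f" "(\<Sum>b<n. g b * y1 $ b) = - inverse d1"
    using solve_aux[OF M d1] by blast
  obtain y2 where y2: "y2 \<in> carrier_vec n" "M *\<^sub>v y2 = vec n f" "(\<Sum>b<n. g b * y2 $ b) = - inverse d2"
    using solve_aux[OF M d2] by blast
  have "M *\<^sub>v (y1 - y2) = 0\<^sub>v n"
    using mult_minus_distrib_mat_vec[OF M(1) y1(1) y2(1)] y1(2) y2(2) by simp
  then have "y1 - y2 = 0\<^sub>v n" using det_nz_kernel[OF M] y1(1) y2(1) by simp
  then have "y1 = y2"
  proof -
    assume z: "y1 - y2 = 0\<^sub>v n"
    show "y1 = y2"
    proof (rule eq_vecI)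
      fix i assume i: "i < dim_vec y2"
      then have "(y1 - y2) $ i = 0" using z y2(1) by simp
      then show "y1 $ i = y2 $ i" using i y1(1) y2(1) by simp
    qed (use y1(1) y2(1) in simp)
  qed
  then show ?thesis using y1(3) y2(3) by simp
qed

lemma rank_outer:
  fixes M :: "'a::field mat"
  assumes M: "M \<in> carrier_mat n n" and e: "\<And>a b. a < n \<Longrightarrow> b < n \<Longrightarrow> M $$ (a,b) = f a * g b"
    and a0: "a0 < n" "f a0 \<noteq> 0" and b0: "b0 < n" "g b0 \<noteq> 0"
  shows "vec_space.rank n M = 1"
proof (rule antisym)
  show "vec_space.rank n M \<le> 1"
    by (rule vec_space.rank_le_1_product_entries[OF M, of f g]) (use M e in auto)
  have c1: "{i. i < n \<and> i \<in> {a0}} = {a0}" "{i. i < n \<and> i \<in> {b0}} = {b0}" using a0 b0 by auto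
  have S: "submatrix M {a0} {b0} \<in> carrier_mat 1 1"
    unfolding submatrix_def using M c1 by simp
  have "det (submatrix M {a0} {b0}) = M $$ (a0, b0)"
    unfolding det_single[OF S] unfolding submatrix_def using M c1 by (simp add: Least_equality)
  then have "det (submatrix M {a0} {b0}) \<noteq> 0" using e a0 b0 by simp
  from vec_space.rank_gt_minor[OF M this] c1 show "1 \<le> vec_space.rank n M" by simp
qed


definition upd :: "nat \<Rightarrow> nat \<Rightarrow> 'a::field mat \<Rightarrow> 'a \<Rightarrow> (nat \<Rightarrow> 'a) \<Rightarrow> 'a mat" where
  "upd q n A d f = mat n n (\<lambda>(a,b). A $$ (a,b) + d * (f a * f b ^ q))"

lemma upd_carrier[simp]: "upd q n A d f \<in> carrier_mat n n"
  unfolding upd_def by simp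

lemma upd_dims[simp]: "dim_row (upd q n A d f) = n" "dim_col (upd q n A d f) = n"
  unfolding upd_def by simp_all

lemma upd_index[simp]: "a < n \<Longrightarrow> b < n \<Longrightarrow> upd q n A d f $$ (a,b) = A $$ (a,b) + d * (f a * f b ^ q)"
  unfolding upd_def by simp

lemma herm_iff:
  fixes A :: "'a::field mat"
  assumes "A \<in> carrier_mat n n"
  shows "hermitian_mat q A \<longleftrightarrow> (\<forall>i<n. \<forall>j<n. A $$ (j,i) ^ q = A $$ (i,j))"
  using assms unfolding hermitian_mat_def conj_transpose_def qbar_def mat_eq_iff by auto

lemma HGL_iff:
  fixes A :: "'a::field mat"
  shows "A \<in> HGL q n \<longleftrightarrow> A \<in> carrier_mat n n \<and> hermitian_mat q A \<and> det A \<noteq> 0"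
  unfolding HGL_def using inv_det by blast

context
  fixes q :: nat
  assumes cq: "card (UNIV :: 'a::{finite,field} set) = q ^ 2" and q3: "q \<ge> 3"
begin

lemma q0: "q > 0" using q3 by simp

lemma upd_herm:
  fixes A :: "'a mat"
  assumes A: "A \<in> carrier_mat n n" "hermitian_mat q A" and d: "d ^ q = d"
  shows "hermitian_mat q (upd q n A d f)"
proof -
  have h: "\<forall>i<n. \<forall>j<n. A $$ (j,i) ^ q = A $$ (i,j)" using herm_iff[OF A(1)] A(2) by simp
  show ?thesis unfolding herm_iff[OF upd_carrier]
    using h d by (simp add: frob_add[OF cq] power_mult_distrib frob_invol[OF cq] mult_ac)
qed

lemma adj_upd:
  fixes A :: "'a mat"
  assumes A: "A \<in> HGL q n" and A1: "upd q n A d f \<in> HGL q n" and d: "d \<noteq> 0"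
    and a0: "a0 < n" "f a0 \<noteq> 0"
  shows "HGL_adj q n A (upd q n A d f)" "HGL_adj q n (upd q n A d f) A"
proof -
  have Ac: "A \<in> carrier_mat n n" using A HGL_iff by blast
  have fq: "f a0 ^ q \<noteq> 0" using a0 by simp
  have "vec_space.rank n (A - upd q n A d f) = 1"
    by (rule rank_outer[of _ n "\<lambda>a. - d * f a" "\<lambda>b. f b ^ q" a0 a0]) (use Ac a0 d fq in auto)
  then show "HGL_adj q n A (upd q n A d f)" unfolding HGL_adj_def using A A1 by simp
  have "vec_space.rank n (upd q n A d f - A) = 1"
    by (rule rank_outer[of _ n "\<lambda>a. d * f a" "\<lambda>b. f b ^ q" a0 a0]) (use Ac a0 d fq in auto)
  then show "HGL_adj q n (upd q n A d f) A" unfolding HGL_adj_def using A A1 by simp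
qed

lemma step_lemma:
  fixes A B H' :: "'a mat"
  assumes A: "A \<in> HGL q n" and B: "B \<in> HGL q n" and c: "c ^ q = c"
    and a0: "a0 < n" "f a0 \<noteq> 0"
    and eq: "\<And>a b. a < n \<Longrightarrow> b < n \<Longrightarrow> B $$ (a,b) - A $$ (a,b) = c * (f a * f b ^ q) + H' $$ (a,b)"
    and H': "H' \<in> carrier_mat n n"
    and IH: "\<And>A' B'. A' \<in> HGL q n \<Longrightarrow> B' \<in> HGL q n \<Longrightarrow> B' - A' = H' \<Longrightarrow> (HGL_adj q n)\<^sup>*\<^sup>* A' B'"
  shows "(HGL_adj q n)\<^sup>*\<^sup>* A B"
proof -
  have Ac: "A \<in> carrier_mat n n" "hermitian_mat q A" "det A \<noteq> 0" using A HGL_iff by blast+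
  have Bc: "B \<in> carrier_mat n n" "hermitian_mat q B" "det B \<noteq> 0" using B HGL_iff by blast+
  define F where "F = {x::'a. x ^ q = x}"
  have F3: "3 \<le> card F" unfolding F_def using card_fix_ge[OF cq q0] q3 by linarith
  define bad1 where "bad1 = {d. det (upd q n A d f) = 0}"
  define bad2 where "bad2 = {d. det (upd q n B (d - c) f) = 0}"
  have b1: "card bad1 \<le> 1"
  proof -
    have "\<forall>x\<in>bad1. \<forall>y\<in>bad1. x = y"
    proof (intro ballI)
    fix x y assume "x \<in> bad1" "y \<in> bad1"
    then show "x = y" unfolding bad1_def upd_def using amo[OF Ac(1) Ac(3), of x f "\<lambda>b. f b ^ q" y] by simp
  qed
  then show ?thesis using card_le_Suc0_iff_eq[of bad1] by simp
  qed
  have b2: "card bad2 \<le> 1"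
  proof -
    have "\<forall>x\<in>bad2. \<forall>y\<in>bad2. x = y"
    proof (intro ballI)
    fix x y assume "x \<in> bad2" "y \<in> bad2"
    then have "x - c = y - c" unfolding bad2_def upd_def using amo[OF Bc(1) Bc(3), of "x - c" f "\<lambda>b. f b ^ q" "y - c"] by simp
    then show "x = y" by simp
  qed
  then show ?thesis using card_le_Suc0_iff_eq[of bad2] by simp
  qed
  have "\<exists>d\<in>F. d \<notin> bad1 \<and> d \<notin> bad2"
  proof (rule ccontr)
    assume "\<not> ?thesis"
    then have "F \<subseteq> bad1 \<union> bad2" by blast
    then have "card F \<le> card (bad1 \<union> bad2)" by (intro card_mono) auto
    also have "\<dots> \<le> card bad1 + card bad2" by (rule card_Un_le)
    finally show False using b1 b2 F3 by linarith
  qed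
  then obtain d where d: "d ^ q = d" "det (upd q n A d f) \<noteq> 0" "det (upd q n B (d - c) f) \<noteq> 0"
    unfolding F_def bad1_def bad2_def by blast
  have dc: "(d - c) ^ q = d - c" using d(1) c by (simp add: frob_minus[OF cq])
  define A1 where "A1 = upd q n A d f"
  define B1 where "B1 = upd q n B (d - c) f"
  have A1: "A1 \<in> HGL q n" unfolding A1_def HGL_iff using upd_herm[OF Ac(1,2) d(1)] d(2) by simp
  have B1: "B1 \<in> HGL q n" unfolding B1_def HGL_iff using upd_herm[OF Bc(1,2) dc] d(3) by simp
  have "B1 - A1 = H'"
  proof (rule eq_matI)
    fix a b assume "a < dim_row H'" "b < dim_col H'"
    then have ab: "a < n" "b < n" using H' by auto
    show "(B1 - A1) $$ (a,b) = H' $$ (a,b)"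
      unfolding A1_def B1_def using ab eq[OF ab] by (simp add: algebra_simps)
  qed (use H' A1_def B1_def in auto)
  then have mid: "(HGL_adj q n)\<^sup>*\<^sup>* A1 B1" using IH A1 B1 by blast
  have first: "(HGL_adj q n)\<^sup>*\<^sup>* A A1"
  proof (cases "d = 0")
    case True
    then have "A1 = A" unfolding A1_def using Ac(1) by (intro eq_matI) auto
    then show ?thesis by simp
  next
    case False
    then show ?thesis using adj_upd(1)[OF A A1[unfolded A1_def] False a0] unfolding A1_def by blast
  qed
  have last: "(HGL_adj q n)\<^sup>*\<^sup>* B1 B"
  proof (cases "d - c = 0")
    case True
    then have "B1 = B" unfolding B1_def using Bc(1) by (intro eq_matI) auto
    then show ?thesis by simp
  next
    case False
    then show ?thesis using adj_upd(2)[OF B B1[unfolded B1_def] False a0] unfolding B1_def by blast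
  qed
  show ?thesis using first mid last by (meson rtranclp_trans)
qed

definition meas :: "nat \<Rightarrow> 'a mat \<Rightarrow> nat" where
  "meas n H = (n + 1) * card {(a,b). a < n \<and> b < n \<and> a \<noteq> b \<and> H $$ (a,b) \<noteq> 0}
     + card {a. a < n \<and> H $$ (a,a) \<noteq> 0}"

lemma main_lemma:
  fixes H :: "'a mat"
  assumes "H \<in> carrier_mat n n" "hermitian_mat q H"
  shows "\<forall>A B. A \<in> HGL q n \<longrightarrow> B \<in> HGL q n \<longrightarrow> B - A = H \<longrightarrow> (HGL_adj q n)\<^sup>*\<^sup>* A B"
  using assms
proof (induction "meas n H" arbitrary: H rule: less_induct)
  case less
  have Hc: "H \<in> carrier_mat n n" and hH: "\<forall>i<n. \<forall>j<n. H $$ (j,i) ^ q = H $$ (i,j)"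
    using less.prems herm_iff by blast+
  define Of where "Of = (\<lambda>H::'a mat. {(a,b). a < n \<and> b < n \<and> a \<noteq> b \<and> H $$ (a,b) \<noteq> 0})"
  define Dg where "Dg = (\<lambda>H::'a mat. {a. a < n \<and> H $$ (a,a) \<noteq> 0})"
  have mOf: "meas n K = (n + 1) * card (Of K) + card (Dg K)" for K unfolding meas_def Of_def Dg_def by simp
  have finOf: "finite (Of K)" for K
    by (rule finite_subset[of _ "{..<n} \<times> {..<n}"]) (auto simp: Of_def)
  have finDg: "finite (Dg K)" for K by (rule finite_subset[of _ "{..<n}"]) (auto simp: Dg_def)
  have Dgle: "card (Dg K) \<le> n" for K
    using card_mono[of "{..<n}" "Dg K"] by (auto simp: Dg_def)
  have reduce: "\<forall>A B. A \<in> HGL q n \<longrightarrow> B \<in> HGL q n \<longrightarrow> B - A = H \<longrightarrow> (HGL_adj q n)\<^sup>*\<^sup>* A B"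
    if c: "c ^ q = c" and a0: "a0 < n" "f a0 \<noteq> 0" and lt: "meas n (upd q n H (- c) f) < meas n H"
    for c f a0
  proof (intro allI impI)
    fix A B assume A: "A \<in> HGL q n" and B: "B \<in> HGL q n" and BA: "B - A = H"
    let ?H' = "upd q n H (- c) f"
    have nc: "(- c) ^ q = - c" using c frob_neg[OF cq q0] by simp
    have IH: "\<forall>A B. A \<in> HGL q n \<longrightarrow> B \<in> HGL q n \<longrightarrow> B - A = ?H' \<longrightarrow> (HGL_adj q n)\<^sup>*\<^sup>* A B"
      using less.hyps[OF lt] upd_herm[OF Hc less.prems(2) nc] by simp
    show "(HGL_adj q n)\<^sup>*\<^sup>* A B"
    proof (rule step_lemma[where f=f and H'="?H'", OF A B c a0])
      fix a b assume ab: "a < n" "b < n"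
      have "B $$ (a,b) - A $$ (a,b) = H $$ (a,b)" using BA ab Hc
        by (metis A HGL_iff carrier_matD index_minus_mat(1))
      then show "B $$ (a, b) - A $$ (a, b) = c * (f a * f b ^ q) + ?H' $$ (a, b)"
        using ab by simp
    qed (use IH in auto)
  qed
  show ?case
  proof (cases "Dg H = {}")
    case False
    then obtain i where i: "i < n" "H $$ (i,i) \<noteq> 0" unfolding Dg_def by blast
    define f where "f = (\<lambda>a::nat. if a = i then (1::'a) else 0)"
    let ?c = "H $$ (i,i)"
    let ?H' = "upd q n H (- ?c) f"
    have c: "?c ^ q = ?c" using hH i by blast
    have fz: "f a * f b ^ q = (if a = i \<and> b = i then 1 else 0)" for a b
      unfolding f_def using q0 by auto
    have "Of ?H' = Of H" unfolding Of_def using fz by (auto split: if_splits)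
    moreover have "Dg ?H' = Dg H - {i}" unfolding Dg_def using fz i by (auto split: if_splits)
    moreover have "card (Dg H - {i}) < card (Dg H)"
      using i finDg by (intro psubset_card_mono) (auto simp: Dg_def)
    ultimately have "meas n ?H' < meas n H" unfolding mOf by simp
    then show ?thesis using reduce[OF c i(1), of f] unfolding f_def by simp
  next
    case Dg0: True
    show ?thesis
    proof (cases "Of H = {}")
      case False
      then obtain i j where ij: "i < n" "j < n" "i \<noteq> j" "H $$ (i,j) \<noteq> 0" unfolding Of_def by blast
      define \<mu> where "\<mu> = H $$ (j,i)"
      define f where "f = (\<lambda>a::nat. if a = i then (1::'a) else if a = j then \<mu> else 0)"
      let ?H' = "upd q n H (- 1) f"
      have hij: "\<mu> ^ q = H $$ (i,j)" unfolding \<mu>_def using hH ij by blast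
      have "Of ?H' \<subseteq> Of H - {(i,j)}"
      proof
        fix x assume x: "x \<in> Of ?H'"
        then obtain a b where x: "x = (a,b)" "a < n" "b < n" "a \<noteq> b" "?H' $$ (a,b) \<noteq> 0"
          unfolding Of_def by blast
        show "x \<in> Of H - {(i,j)}"
        proof (cases "(a = i \<and> b = j) \<or> (a = j \<and> b = i)")
          case True
          then show ?thesis using x hij ij unfolding f_def \<mu>_def by auto
        next
          case False
          then have "f a * f b ^ q = 0" unfolding f_def using x(4) q0 by auto
          then show ?thesis using x False unfolding Of_def by auto
        qed
      qed
      moreover have "(i,j) \<in> Of H" unfolding Of_def using ij by auto
      ultimately have "Of ?H' \<subset> Of H" by blast
      then have "card (Of ?H') < card (Of H)" using finOf by (intro psubset_card_mono) auto
      then have lt: "card (Of ?H') + 1 \<le> card (Of H)" by simp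
      have "(n + 1) * card (Of ?H') + card (Dg ?H') < (n + 1) * (card (Of ?H') + 1)"
        using Dgle[of ?H'] by simp
      also have "\<dots> \<le> (n + 1) * card (Of H)" using lt by (rule mult_le_mono2)
      finally have "(n + 1) * card (Of ?H') + card (Dg ?H') < (n + 1) * card (Of H) + card (Dg H)"
        by linarith
      then have "meas n ?H' < meas n H" unfolding mOf .
      moreover have "(1::'a) ^ q = 1" by simp
      moreover have "f i \<noteq> 0" unfolding f_def by simp
      ultimately show ?thesis using reduce[of 1 i f] ij by simp
    next
      case Of0: True
      show ?thesis
      proof (intro allI impI)
        fix A B assume A: "A \<in> HGL q n" and B: "B \<in> HGL q n" and BA: "B - A = H"
        have Ac: "A \<in> carrier_mat n n" and Bc: "B \<in> carrier_mat n n" using A B HGL_iff by blast+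
        have "B = A"
        proof (rule eq_matI)
          fix a b assume "a < dim_row A" "b < dim_col A"
          then have ab: "a < n" "b < n" using Ac by auto
          have "H $$ (a,b) = 0" using Dg0 Of0 ab unfolding Dg_def Of_def by (cases "a = b") auto
          moreover have "H $$ (a,b) = B $$ (a,b) - A $$ (a,b)" using BA ab Ac by auto
          ultimately show "B $$ (a,b) = A $$ (a,b)" by simp
        qed (use Ac Bc in auto)
        then show "(HGL_adj q n)\<^sup>*\<^sup>* A B" by simp
      qed
    qed
  qed
qed

end

theorem lemma2p5:
  fixes q n :: nat
  assumes "card (UNIV :: 'a set) = q ^ 2"
    and "q \<ge> 3"
    and "n \<ge> 2"
  shows "\<forall>A \<in> (HGL q n :: 'a::{finite,field} mat set). \<forall>B \<in> HGL q n. (HGL_adj q n)\<^sup>*\<^sup>* A B"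
proof (intro ballI)
  fix A B :: "'a mat" assume A: "A \<in> HGL q n" and B: "B \<in> HGL q n"
  have Ac: "A \<in> carrier_mat n n" "hermitian_mat q A" using A HGL_iff by blast+
  have Bc: "B \<in> carrier_mat n n" "hermitian_mat q B" using B HGL_iff by blast+
  have Hc: "B - A \<in> carrier_mat n n" using Ac(1) by (rule minus_carrier_mat)
  have dA: "dim_row A = n" "dim_col A = n" using Ac(1) by auto
  have hA: "\<forall>i<n. \<forall>j<n. A $$ (j,i) ^ q = A $$ (i,j)" using herm_iff[OF Ac(1)] Ac(2) by simp
  have hB: "\<forall>i<n. \<forall>j<n. B $$ (j,i) ^ q = B $$ (i,j)" using herm_iff[OF Bc(1)] Bc(2) by simp
  have "\<forall>i<n. \<forall>j<n. (B - A) $$ (j,i) ^ q = (B - A) $$ (i,j)"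
  proof (intro allI impI)
    fix i j assume ij: "i < n" "j < n"
    have "(B - A) $$ (j,i) ^ q = (B $$ (j,i) - A $$ (j,i)) ^ q" using ij dA by simp
    also have "\<dots> = B $$ (j,i) ^ q - A $$ (j,i) ^ q" by (rule frob_minus[OF assms(1)])
    also have "\<dots> = B $$ (i,j) - A $$ (i,j)" using hA hB ij by presburger
    also have "\<dots> = (B - A) $$ (i,j)" using ij dA by simp
    finally show "(B - A) $$ (j,i) ^ q = (B - A) $$ (i,j)" .
  qed
  then have hH: "hermitian_mat q (B - A)" using herm_iff[OF Hc] by blast
  have "\<forall>A' B'. A' \<in> HGL q n \<longrightarrow> B' \<in> HGL q n \<longrightarrow> B' - A' = B - A \<longrightarrow> (HGL_adj q n)\<^sup>*\<^sup>* A' B'"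
    by (rule main_lemma[OF assms(1,2) Hc hH])
  then show "(HGL_adj q n)\<^sup>*\<^sup>* A B" using A B by blast
qed

end
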